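(* Let $G$ be a free abelian group with a basis $E$, let $e\in E$, let $\check G$ be the subgroup generated by $E\setminus\{e\}$, and let $\lambda$ be the shift on $(G,e)^{\otimes\mathbb{Z}}$. If $z\in(G,e)^{\otimes\mathbb{Z}}$ and $w\in H(G,e)$ satisfy $(\mathrm{id}-\lambda)(z)=w$, then $z\in\mathbb{Z}e^{\otimes\mathbb{Z}}$ and $w=0$.
   Context: $(G,e)^{\otimes\mathbb{Z}}$ is the inductive limit of $G\to G^{\otimes3}\to G^{\otimes5}\to\cdots$ (tensor products over $\mathbb{Z}$) with connecting maps $x\mapsto e\otimes x\otimes e$; equivalently it is the span of formal tensors $\bigotimes_{i\in\mathbb{Z}}x_i$ with $x_i\in G$ and $x_i=e$ for all but finitely many $i$ (with $G^{\otimes 2n-1}$ identified with the span of those with $x_i=e$ for $|i|\ge n$). $e^{\otimes\mathbb{Z}}=\bigotimes_{i\in\mathbb{Z}}e$. The shift $\lambda$ is the automorphism with $\lambda(\bigotimes_i x_i)=\bigotimes_i x_{i-1}$. $\check G\otimes G^{\otimes\mathbb{N}}$ denotes the span of those $\bigotimes_i x_i$ with $x_0\in\check G$ and $x_i=e$ for all $i<0$, and $H(G,e):=\mathbb{Z}e^{\otimes\mathbb{Z}}+\check G\otimes G^{\otimes\mathbb{N}}$. *)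

theory Defs
  imports Main
begin

text \<open>The free abelian group G with basis E, realised concretely as the finitely
  supported integer-valued functions on E (coordinates w.r.t. the basis E).\<close>
definition freeab :: "'a set \<Rightarrow> ('a \<Rightarrow> int) set" where
  "freeab E = {x. finite {a. x a \<noteq> 0} \<and> {a. x a \<noteq> 0} \<subseteq> E}"

definition basis_vec :: "'a \<Rightarrow> 'a \<Rightarrow> int" where
  "basis_vec e = (\<lambda>a. if a = e then 1 else 0)"

text \<open>Subgroup of G generated by E - {e}: elements with vanishing e-coordinate.\<close>
definition check_G :: "'a set \<Rightarrow> 'a \<Rightarrow> ('a \<Rightarrow> int) set" where
  "check_G E e = {x \<in> freeab E. x e = 0}"

text \<open>Basis words of (G,e)^{\<otimes>Z}: sequences of basis elements, equal to e
  for all but finitely many indices.\<close>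
definition words :: "'a set \<Rightarrow> 'a \<Rightarrow> (int \<Rightarrow> 'a) set" where
  "words E e = {f. (\<forall>i. f i \<in> E) \<and> finite {i. f i \<noteq> e}}"

definition admissible :: "'a set \<Rightarrow> 'a \<Rightarrow> (int \<Rightarrow> 'a \<Rightarrow> int) \<Rightarrow> bool" where
  "admissible E e x \<longleftrightarrow> (\<forall>i. x i \<in> freeab E) \<and> finite {i. x i \<noteq> basis_vec e}"

text \<open>The formal tensor \<Otimes>_i x_i, written in coordinates with respect to the
  basis of (G,e)^{\<otimes>Z} formed by the tensors of basis elements (the words):
  the coefficient of the word f is the product of the coordinates x_i(f i).\<close>
definition tens :: "'a set \<Rightarrow> 'a \<Rightarrow> (int \<Rightarrow> 'a \<Rightarrow> int) \<Rightarrow> (int \<Rightarrow> 'a) \<Rightarrow> int" where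
  "tens E e x = (\<lambda>f. if f \<in> words E e
      then (\<Prod>i\<in>{i. x i \<noteq> basis_vec e} \<union> {i. f i \<noteq> e}. x i (f i)) else 0)"

definition int_span :: "('b \<Rightarrow> int) set \<Rightarrow> ('b \<Rightarrow> int) set" where
  "int_span A = {(\<lambda>f. \<Sum>k<(n::nat). (c k :: int) * v k f) | n c v. \<forall>k<n. v k \<in> A}"

definition tensZ :: "'a set \<Rightarrow> 'a \<Rightarrow> ((int \<Rightarrow> 'a) \<Rightarrow> int) set" where
  "tensZ E e = int_span {tens E e x | x. admissible E e x}"

definition eZ :: "'a set \<Rightarrow> 'a \<Rightarrow> (int \<Rightarrow> 'a) \<Rightarrow> int" where
  "eZ E e = tens E e (\<lambda>i. basis_vec e)"

text \<open>The shift \<lambda>(\<Otimes> x_i) = \<Otimes> x_{i-1}, in coordinates.\<close>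
definition shift :: "((int \<Rightarrow> 'a) \<Rightarrow> int) \<Rightarrow> (int \<Rightarrow> 'a) \<Rightarrow> int" where
  "shift z = (\<lambda>f. z (\<lambda>j. f (j + 1)))"

definition checkG_tens_N :: "'a set \<Rightarrow> 'a \<Rightarrow> ((int \<Rightarrow> 'a) \<Rightarrow> int) set" where
  "checkG_tens_N E e = int_span {tens E e x | x. admissible E e x \<and> x 0 \<in> check_G E e
      \<and> (\<forall>i<0. x i = basis_vec e)}"

definition H_set :: "'a set \<Rightarrow> 'a \<Rightarrow> ((int \<Rightarrow> 'a) \<Rightarrow> int) set" where
  "H_set E e = {(\<lambda>f. c * eZ E e f + h f) | c h. h \<in> checkG_tens_N E e}"

end

theory Submission
  imports Defs
begin

lemma span_supp:
  assumes "z \<in> int_span A"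
    and "\<forall>v\<in>A. \<exists>T. finite T \<and> (\<forall>f. v f \<noteq> 0 \<longrightarrow> f \<in> W \<and> {i. f i \<noteq> e} \<subseteq> T)"
  shows "\<exists>T. finite T \<and> (\<forall>f. z f \<noteq> 0 \<longrightarrow> f \<in> W \<and> {i. f i \<noteq> e} \<subseteq> T)"
proof -
  have "\<exists>n c v. z = (\<lambda>f. \<Sum>k<(n::nat). (c k::int) * v k f) \<and> (\<forall>k<n. v k \<in> A)"
    using assms(1) unfolding int_span_def by simp
  then obtain n :: nat and c v where z: "z = (\<lambda>f. \<Sum>k<n. c k * v k f)" and v: "\<forall>k<n. v k \<in> A"
    by blast
  have "\<forall>k. \<exists>T. k<n \<longrightarrow> finite T \<and> (\<forall>f. v k f \<noteq> 0 \<longrightarrow> f \<in> W \<and> {i. f i \<noteq> e} \<subseteq> T)"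
    using v assms(2) by metis
  then obtain T where T: "\<And>k. k<n \<Longrightarrow> finite (T k) \<and> (\<forall>f. v k f \<noteq> 0 \<longrightarrow> f \<in> W \<and> {i. f i \<noteq> e} \<subseteq> T k)"
    by metis
  show ?thesis
  proof (intro exI conjI allI impI)
    show "finite (\<Union>k<n. T k)" using T by auto
    fix f assume "z f \<noteq> 0"
    then obtain k where "k<n" "v k f \<noteq> 0" unfolding z
      by (metis (mono_tags, lifting) mult_zero_right sum.neutral lessThan_iff)
    then show "f \<in> W" "{i. f i \<noteq> e} \<subseteq> (\<Union>k<n. T k)" using T by blast+
  qed
qed

lemma span_R:
  assumes "z \<in> int_span A"
    and "\<forall>v\<in>A. \<forall>f. v f \<noteq> 0 \<longrightarrow> R f" and "z f \<noteq> 0"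
  shows "R f"
proof -
  have "\<exists>n c v. z = (\<lambda>f. \<Sum>k<(n::nat). (c k::int) * v k f) \<and> (\<forall>k<n. v k \<in> A)"
    using assms(1) unfolding int_span_def by simp
  then obtain n :: nat and c v where z: "z = (\<lambda>f. \<Sum>k<n. c k * v k f)" and v: "\<forall>k<n. v k \<in> A"
    by blast
  obtain k where "k<n" "v k f \<noteq> 0" using assms(3) unfolding z
    by (metis (mono_tags, lifting) mult_zero_right sum.neutral lessThan_iff)
  then show ?thesis using v assms(2) by blast
qed

lemma tens_supp:
  assumes "admissible E e x" "tens E e x f \<noteq> 0"
  shows "f \<in> words E e \<and> {i. f i \<noteq> e} \<subseteq> {i. x i \<noteq> basis_vec e}"
proof -
  have fw: "f \<in> words E e" using assms(2) unfolding tens_def by (auto split: if_splits)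
  let ?S = "{i. x i \<noteq> basis_vec e} \<union> {i. f i \<noteq> e}"
  have fin: "finite ?S" using assms(1) fw unfolding admissible_def words_def by auto
  have p: "(\<Prod>i\<in>?S. x i (f i)) \<noteq> 0" using assms(2) fw unfolding tens_def by auto
  have "{i. f i \<noteq> e} \<subseteq> {i. x i \<noteq> basis_vec e}"
  proof
    fix i assume i: "i \<in> {i. f i \<noteq> e}"
    show "i \<in> {i. x i \<noteq> basis_vec e}"
    proof (rule ccontr)
      assume "i \<notin> {i. x i \<noteq> basis_vec e}"
      then have "x i (f i) = 0" using i by (simp add: basis_vec_def)
      then have "(\<Prod>i\<in>?S. x i (f i)) = 0" using fin i by (intro prod_zero[OF fin] bexI[of _ i]) auto
      then show False using p by simp
    qed
  qed
  then show ?thesis using fw by simp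
qed

lemma tens_H:
  assumes "admissible E e x" "x 0 \<in> check_G E e" "\<forall>i<0. x i = basis_vec e" "tens E e x f \<noteq> 0"
  shows "(\<forall>i<0. f i = e) \<and> f 0 \<noteq> e"
proof -
  have fw: "f \<in> words E e" using assms(4) unfolding tens_def by (auto split: if_splits)
  let ?S = "{i. x i \<noteq> basis_vec e} \<union> {i. f i \<noteq> e}"
  have fin: "finite ?S" using assms(1) fw unfolding admissible_def words_def by auto
  have p: "(\<Prod>i\<in>?S. x i (f i)) \<noteq> 0" using assms(4) fw unfolding tens_def by auto
  have 1: "\<forall>i<0. f i = e"
  proof (intro allI impI, rule ccontr)
    fix i :: int assume i: "i < 0" "f i \<noteq> e"
    then have "x i (f i) = 0" using assms(3) by (simp add: basis_vec_def)
    then have "(\<Prod>i\<in>?S. x i (f i)) = 0" using fin i by (intro prod_zero[OF fin] bexI[of _ i]) auto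
    then show False using p by simp
  qed
  have 2: "f 0 \<noteq> e"
  proof
    assume f0: "f 0 = e"
    have x0: "x 0 e = 0" using assms(2) unfolding check_G_def by auto
    then have "x 0 \<noteq> basis_vec e" by (metis basis_vec_def zero_neq_one)
    then have "0 \<in> ?S" by simp
    then have "(\<Prod>i\<in>?S. x i (f i)) = 0" using fin x0 f0 by (intro prod_zero[OF fin] bexI[of _ 0]) auto
    then show False using p by simp
  qed
  show ?thesis using 1 2 by simp
qed

lemma eZ_val:
  assumes "e \<in> E"
  shows "eZ E e f = (if f = (\<lambda>_. e) then 1 else 0)"
proof (cases "f \<in> words E e")
  case False
  moreover have "(\<lambda>_. e) \<in> words E e" using assms unfolding words_def by simp
  ultimately have "f \<noteq> (\<lambda>_. e)" by metis
  then show ?thesis using False unfolding eZ_def tens_def by simp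
next
  case True
  have fin: "finite {i. f i \<noteq> e}" using True unfolding words_def by simp
  have "eZ E e f = (\<Prod>i\<in>{i. f i \<noteq> e}. basis_vec e (f i))"
    using True unfolding eZ_def tens_def by simp
  also have "\<dots> = (if f = (\<lambda>_. e) then 1 else 0)"
  proof (cases "f = (\<lambda>_. e)")
    case True then show ?thesis by simp
  next
    case False
    then obtain a where a: "f a \<noteq> e" by auto
    then have "basis_vec e (f a) = 0" by (simp add: basis_vec_def)
    then have "(\<Prod>i\<in>{i. f i \<noteq> e}. basis_vec e (f i)) = 0"
      using fin a by (intro prod_zero) auto
    then show ?thesis using False by simp
  qed
  finally show ?thesis .
qed

theorem lemma2:
  fixes E :: "'a set" and e :: 'a
    and z w :: "(int \<Rightarrow> 'a) \<Rightarrow> int"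
  assumes "e \<in> E"
    and "z \<in> tensZ E e"
    and "w \<in> H_set E e"
    and "(\<lambda>f. z f - shift z f) = w"
  shows "(\<exists>c::int. z = (\<lambda>f. c * eZ E e f)) \<and> w = (\<lambda>f. 0)"
proof -
  define fe where "fe = (\<lambda>_::int. e)"
  have "\<forall>v\<in>{tens E e x |x. admissible E e x}. \<exists>T. finite T \<and> (\<forall>f. v f \<noteq> 0 \<longrightarrow> f \<in> words E e \<and> {i. f i \<noteq> e} \<subseteq> T)"
  proof
    fix v assume "v \<in> {tens E e x |x. admissible E e x}"
    then obtain x where vx: "v = tens E e x" and ad: "admissible E e x" by blast
    have "finite {i. x i \<noteq> basis_vec e}" using ad unfolding admissible_def by simp
    moreover have "\<forall>f. v f \<noteq> 0 \<longrightarrow> f \<in> words E e \<and> {i. f i \<noteq> e} \<subseteq> {i. x i \<noteq> basis_vec e}"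
      using tens_supp[OF ad] vx by simp
    ultimately show "\<exists>T. finite T \<and> (\<forall>f. v f \<noteq> 0 \<longrightarrow> f \<in> words E e \<and> {i. f i \<noteq> e} \<subseteq> T)"
      by blast
  qed
  from span_supp[OF assms(2)[unfolded tensZ_def] this]
  obtain T where T: "finite T" "\<And>f. z f \<noteq> 0 \<Longrightarrow> f \<in> words E e \<and> {i. f i \<noteq> e} \<subseteq> T"
    by blast
  obtain c h where w: "w = (\<lambda>f. c * eZ E e f + h f)" and h: "h \<in> checkG_tens_N E e"
    using assms(3) unfolding H_set_def by blast
  have hA: "\<forall>v\<in>{tens E e x |x. admissible E e x \<and> x 0 \<in> check_G E e \<and> (\<forall>i<0. x i = basis_vec e)}.
      \<forall>f. v f \<noteq> 0 \<longrightarrow> (\<forall>i<0. f i = e) \<and> f 0 \<noteq> e"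
  proof (intro ballI allI impI)
    fix v f assume "v \<in> {tens E e x |x. admissible E e x \<and> x 0 \<in> check_G E e \<and> (\<forall>i<0. x i = basis_vec e)}"
      and vf: "v f \<noteq> 0"
    then obtain x where vx: "v = tens E e x" and ad: "admissible E e x" "x 0 \<in> check_G E e"
      "\<forall>i<0. x i = basis_vec e" by blast
    show "(\<forall>i<0. f i = e) \<and> f 0 \<noteq> e" using tens_H[OF ad] vf vx by simp
  qed
  have hR: "\<And>f. h f \<noteq> 0 \<Longrightarrow> (\<forall>i<0. f i = e) \<and> f 0 \<noteq> e"
    using span_R[OF h[unfolded checkG_tens_N_def] hA] by blast
  have wz: "\<And>f. w f = z f - z (\<lambda>j. f (j + 1))"
    using fun_cong[OF assms(4)] unfolding shift_def by simp
  have "w fe = 0" using wz unfolding fe_def by simp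
  moreover have "h fe = 0" using hR unfolding fe_def by blast
  ultimately have c0: "c = 0" using w eZ_val[OF assms(1)] unfolding fe_def by simp
  have wh: "\<And>f. w f = h f" using w c0 by simp
  have zero: "z f = 0" if nf: "f \<noteq> fe" for f
  proof (cases "f \<in> words E e")
    case False then show ?thesis using T by blast
  next
    case True
    obtain a where a: "f a \<noteq> e" using nf unfolding fe_def by auto
    define g where "g k = (\<lambda>j. f (j + k))" for k :: int
    have step: "z (g k) - z (g (k+1)) = w (g k)" for k
    proof -
      have "(\<lambda>j. g k (j + 1)) = g (k+1)" unfolding g_def by (auto simp: algebra_simps)
      then show ?thesis using wz by simp
    qed
    have uniq: "k1 = k2" if "w (g k1) \<noteq> 0" "w (g k2) \<noteq> 0" for k1 k2
    proof (rule ccontr)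
      assume "k1 \<noteq> k2"
      then consider "k1 < k2" | "k2 < k1" by linarith
      then show False
      proof cases
        case 1
        have "h (g k2) \<noteq> 0" using that wh by simp
        then have "\<forall>i<0. g k2 i = e" using hR by blast
        then have "g k2 (k1 - k2) = e" using 1 by simp
        moreover have "h (g k1) \<noteq> 0" using that wh by simp
        then have "g k1 0 \<noteq> e" using hR by blast
        ultimately show False unfolding g_def by simp
      next
        case 2
        have "h (g k1) \<noteq> 0" using that wh by simp
        then have "\<forall>i<0. g k1 i = e" using hR by blast
        then have "g k1 (k2 - k1) = e" using 2 by simp
        moreover have "h (g k2) \<noteq> 0" using that wh by simp
        then have "g k2 0 \<noteq> e" using hR by blast
        ultimately show False unfolding g_def by simp
      qed
    qed
    obtain N where N: "\<And>t. t \<in> T \<Longrightarrow> \<bar>t\<bar> \<le> N"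
    proof -
      have "\<bar>t\<bar> \<le> Max (abs ` T)" if "t \<in> T" for t
        by (rule Max_ge) (use T(1) that in auto)
      then show ?thesis using that by blast
    qed
    have far: "z (g k) = 0" if "\<bar>a - k\<bar> > N" for k
    proof (rule ccontr)
      assume "z (g k) \<noteq> 0"
      then have "{i. g k i \<noteq> e} \<subseteq> T" using T(2)[of "g k"] by simp
      moreover have "g k (a - k) \<noteq> e" using a unfolding g_def by simp
      ultimately have "a - k \<in> T" by blast
      then have "\<bar>a - k\<bar> \<le> N" by (rule N)
      then show False using that by simp
    qed
    have disj: "(\<forall>k\<ge>0. w (g k) = 0) \<or> (\<forall>k<0. w (g k) = 0)"
    proof (rule ccontr)
      assume "\<not> ?thesis"
      then obtain k1 k2 where "k1 \<ge> 0" "w (g k1) \<noteq> 0" "k2 < 0" "w (g k2) \<noteq> 0" by auto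
      then show False using uniq[of k1 k2] by simp
    qed
    define K where "K = \<bar>a\<bar> + \<bar>N\<bar> + 1"
    have K0: "K \<ge> 0" unfolding K_def by simp
    have g0: "g 0 = f" unfolding g_def by simp
    show ?thesis using \<open>(\<forall>k\<ge>0. w (g k) = 0) \<or> (\<forall>k<0. w (g k) = 0)\<close>
    proof
      assume A: "\<forall>k\<ge>0. w (g k) = 0"
      have "z (g 0) = z (g (int n))" for n
      proof (induction n)
        case (Suc n)
        have "z (g (int n)) - z (g (int n + 1)) = w (g (int n))" by (rule step)
        moreover have "w (g (int n)) = 0" using A by simp
        ultimately show ?case using Suc by (simp add: add.commute)
      qed simp
      from this[of "nat K"] have "z (g 0) = z (g K)" using K0 by simp
      moreover have "z (g K) = 0" by (rule far) (unfold K_def, arith)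
      ultimately show ?thesis using g0 by simp
    next
      assume A: "\<forall>k<0. w (g k) = 0"
      have "z (g 0) = z (g (- int n))" for n
      proof (induction n)
        case (Suc n)
        have "z (g (- int (Suc n))) - z (g (- int (Suc n) + 1)) = 0"
          using step[of "- int (Suc n)"] A by simp
        moreover have "- int (Suc n) + 1 = - int n" by simp
        ultimately show ?case using Suc by simp
      qed simp
      from this[of "nat K"] have "z (g 0) = z (g (- K))" using K0 by simp
      moreover have "z (g (- K)) = 0" by (rule far) (unfold K_def, arith)
      ultimately show ?thesis using g0 by simp
    qed
  qed
  have "z = (\<lambda>f. z fe * eZ E e f)"
  proof
    fix f show "z f = z fe * eZ E e f"
      using zero eZ_val[OF assms(1)] unfolding fe_def by (cases "f = (\<lambda>_. e)") auto
  qed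
  moreover have "w = (\<lambda>f. 0)"
  proof
    fix f
    show "w f = 0"
    proof (cases "f = fe")
      case True then show ?thesis using \<open>w fe = 0\<close> by simp
    next
      case False
      have "(\<lambda>j. f (j + 1)) \<noteq> fe"
      proof
        assume "(\<lambda>j. f (j + 1)) = fe"
        then have "f i = e" for i unfolding fe_def by (metis diff_add_cancel)
        then show False using False unfolding fe_def by auto
      qed
      then show ?thesis using wz zero False by simp
    qed
  qed
  ultimately show ?thesis by blast
qed

end
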